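(* Let $G=(V,E)$ be a directed graph with edge weights $wt$ and no cycle of negative or zero weight, let $x_1,y_1,x_2,y_2\in V$, and let $e=(a,v)\in E$ with $\mathrm{dist}(x_i,y_i)=\mathrm{dist}(x_i,a)+wt(a,v)+\mathrm{dist}(v,y_i)$ for $i=1,2$. Then $$H_{av}(x_1,y_1,x_2,y_2)=F(x_2,a)\cdot z_{av}^2\cdot F_{\mathrm{disj}}(x_1,a,v,y_2)\cdot F(v,y_1).$$
   Context: Introduce an indeterminate $z_e$ (also written $z_{uv}$ for $e=(u,v)$) for each edge; polynomials have coefficients in a field of characteristic two. For a simple path $P$ with edges $e_1,\dots,e_\ell$, $f(P)=\prod_i z_{e_i}$ ($1$ for a single-vertex path). $\Pi(x,y)$ is the set of shortest paths from $x$ to $y$ and $F(x,y)=\sum_{P\in\Pi(x,y)}f(P)$. Paths from $x_1$ to $y_1$ and from $x_2$ to $y_2$ are internally vertex-disjoint if they share no vertex outside $\{x_1,y_1\}\cap\{x_2,y_2\}$; $F_{\mathrm{disj}}(x_1,y_1,x_2,y_2)=\sum f(P_1)f(P_2)$ over internally vertex-disjoint pairs $(P_1,P_2)\in\Pi(x_1,y_1)\times\Pi(x_2,y_2)$. For a path $P$ containing edge $e=(a,v)$ and vertices $x$ before $e$ and $y$ after $e$: $P[x,e]$ denotes the subpath $P[x,a]$ and $P[e,y]$ the subpath $P[v,y]$. $H_{av}(x_1,y_1,x_2,y_2)=\sum f(P_1)f(P_2)$ over pairs $(P_1,P_2)\in\Pi(x_1,y_1)\times\Pi(x_2,y_2)$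 with $e\in E(P_1)\cap E(P_2)$ and $P_1[x_1,e]$, $P_2[e,y_2]$ internally vertex-disjoint. *)

theory Defs
  imports "HOL-Analysis.Analysis" "HOL-Library.Poly_Mapping" "HOL-Library.Multiset"
begin

text \<open>Polynomials in the indeterminates z_e (one per edge e) with coefficients in 'k:
  a polynomial is a finitely supported map from monomials (multisets of edges) to 'k;
  the ring structure is the convolution product of Poly_Mapping.\<close>

type_synonym ('v,'k) epoly = "('v \<times> 'v) multiset \<Rightarrow>\<^sub>0 'k"

definition edges_of :: "'v list \<Rightarrow> ('v \<times> 'v) list" where
  "edges_of P = zip P (tl P)"

definition is_path :: "('v \<times> 'v) set \<Rightarrow> 'v \<Rightarrow> 'v \<Rightarrow> 'v list \<Rightarrow> bool" where
  "is_path E x y P \<longleftrightarrow> P \<noteq> [] \<and> hd P = x \<and> last P = y \<and> distinct P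
     \<and> set (edges_of P) \<subseteq> E"

definition path_weight :: "('v \<times> 'v \<Rightarrow> real) \<Rightarrow> 'v list \<Rightarrow> real" where
  "path_weight wt P = sum_list (map wt (edges_of P))"

definition is_cycle :: "('v \<times> 'v) set \<Rightarrow> 'v list \<Rightarrow> bool" where
  "is_cycle E C \<longleftrightarrow> C \<noteq> [] \<and> distinct C \<and> set (edges_of C) \<subseteq> E \<and> (last C, hd C) \<in> E"

definition cycle_weight :: "('v \<times> 'v \<Rightarrow> real) \<Rightarrow> 'v list \<Rightarrow> real" where
  "cycle_weight wt C = path_weight wt C + wt (last C, hd C)"

text \<open>Distance; +infinity if y is unreachable from x.\<close>

definition gdist :: "('v \<times> 'v) set \<Rightarrow> ('v \<times> 'v \<Rightarrow> real) \<Rightarrow> 'v \<Rightarrow> 'v \<Rightarrow> ereal" where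
  "gdist E wt x y = (INF P \<in> {P. is_path E x y P}. ereal (path_weight wt P))"

definition shortest_paths :: "('v \<times> 'v) set \<Rightarrow> ('v \<times> 'v \<Rightarrow> real) \<Rightarrow> 'v \<Rightarrow> 'v \<Rightarrow> 'v list set" where
  "shortest_paths E wt x y = {P. is_path E x y P \<and> ereal (path_weight wt P) = gdist E wt x y}"

definition fmono :: "'v list \<Rightarrow> ('v,'k::zero_neq_one) epoly" where
  "fmono P = Poly_Mapping.single (mset (edges_of P)) 1"

definition Fsum :: "('v \<times> 'v) set \<Rightarrow> ('v \<times> 'v \<Rightarrow> real) \<Rightarrow> 'v \<Rightarrow> 'v \<Rightarrow> ('v,'k::comm_ring_1) epoly" where
  "Fsum E wt x y = (\<Sum>P \<in> shortest_paths E wt x y. fmono P)"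

definition int_disjoint :: "'v \<Rightarrow> 'v \<Rightarrow> 'v list \<Rightarrow> 'v \<Rightarrow> 'v \<Rightarrow> 'v list \<Rightarrow> bool" where
  "int_disjoint x1 y1 P1 x2 y2 P2 \<longleftrightarrow> set P1 \<inter> set P2 \<subseteq> {x1, y1} \<inter> {x2, y2}"

definition Fdisj :: "('v \<times> 'v) set \<Rightarrow> ('v \<times> 'v \<Rightarrow> real) \<Rightarrow> 'v \<Rightarrow> 'v \<Rightarrow> 'v \<Rightarrow> 'v \<Rightarrow> ('v,'k::comm_ring_1) epoly" where
  "Fdisj E wt x1 y1 x2 y2 =
     (\<Sum>(P1,P2) \<in> {(P1,P2). P1 \<in> shortest_paths E wt x1 y1 \<and> P2 \<in> shortest_paths E wt x2 y2
                        \<and> int_disjoint x1 y1 P1 x2 y2 P2}. fmono P1 * fmono P2)"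

text \<open>For a path P containing edge (a,v): prefix P[x,e] = P[x,a], suffix P[e,y] = P[v,y].\<close>

definition prefix_to :: "'v \<Rightarrow> 'v list \<Rightarrow> 'v list" where
  "prefix_to a P = takeWhile (\<lambda>u. u \<noteq> a) P @ [a]"

definition suffix_from :: "'v \<Rightarrow> 'v list \<Rightarrow> 'v list" where
  "suffix_from v P = dropWhile (\<lambda>u. u \<noteq> v) P"

definition Hsum :: "('v \<times> 'v) set \<Rightarrow> ('v \<times> 'v \<Rightarrow> real) \<Rightarrow> 'v \<Rightarrow> 'v \<Rightarrow> 'v \<Rightarrow> 'v \<Rightarrow> 'v \<Rightarrow> 'v \<Rightarrow> ('v,'k::comm_ring_1) epoly" where
  "Hsum E wt a v x1 y1 x2 y2 =
     (\<Sum>(P1,P2) \<in> {(P1,P2). P1 \<in> shortest_paths E wt x1 y1 \<and> P2 \<in> shortest_paths E wt x2 y2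
                        \<and> (a,v) \<in> set (edges_of P1) \<and> (a,v) \<in> set (edges_of P2)
                        \<and> int_disjoint x1 a (prefix_to a P1) v y2 (suffix_from v P2)}.
        fmono P1 * fmono P2)"

end

theory Submission
  imports Defs
begin

lemma edges_of_simps[simp]:
  "edges_of [] = []" "edges_of [x] = []" "edges_of (x # y # zs) = (x, y) # edges_of (y # zs)"
  by (simp_all add: edges_of_def)

lemma edges_of_append_cons:
  "edges_of (xs @ y # ys) = edges_of (xs @ [y]) @ edges_of (y # ys)"
proof (induction xs)
  case Nil then show ?case by simp
next
  case (Cons x xs) then show ?case by (cases xs) auto
qed

lemma edges_of_snoc:
  "xs \<noteq> [] \<Longrightarrow> edges_of (xs @ [y]) = edges_of xs @ [(last xs, y)]"
proof (induction xs)
  case Nil then show ?case by simp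
next
  case (Cons x xs) then show ?case by (cases xs) auto
qed

lemma pw_append_cons:
  "path_weight wt (xs @ y # ys) = path_weight wt (xs @ [y]) + path_weight wt (y # ys)"
  unfolding path_weight_def by (subst edges_of_append_cons) simp

lemma pw_snoc:
  "xs \<noteq> [] \<Longrightarrow> path_weight wt (xs @ [y]) = path_weight wt xs + wt (last xs, y)"
  unfolding path_weight_def by (simp add: edges_of_snoc)

lemma pw_simps[simp]: "path_weight wt [x] = 0"
  "path_weight wt (x # y # zs) = wt (x, y) + path_weight wt (y # zs)"
  by (simp_all add: path_weight_def)

lemma fmono_split:
  "fmono (A @ a # v # B) = (fmono (A @ [a]) * fmono [a, v] * fmono (v # B) :: ('v,'k::comm_ring_1) epoly)"
proof -
  have "edges_of (A @ a # v # B) = edges_of (A @ [a]) @ [(a,v)] @ edges_of (v # B)"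
    by (subst edges_of_append_cons) simp
  then show ?thesis unfolding fmono_def by (simp add: mult_single add.assoc)
qed

lemma decomp_edge:
  "(a, v) \<in> set (edges_of P) \<Longrightarrow> \<exists>A B. P = A @ a # v # B"
proof (induction P rule: induct_list012)
  case (3 x y zs)
  show ?case
  proof (cases "(x, y) = (a, v)")
    case True then show ?thesis by auto
  next
    case False
    then obtain A B where "y # zs = A @ a # v # B" using 3 by auto
    then have "x # y # zs = (x # A) @ a # v # B" by simp
    then show ?thesis by blast
  qed
qed auto

lemma decomp_distinct_cycle:
  "W = A @ [u] @ B @ [u] @ C \<Longrightarrow> \<exists>A u B C. W = A @ [u] @ B @ [u] @ C \<and> distinct (u # B)"
proof (induction "length B" arbitrary: A u B C rule: less_induct)
  case less
  show ?case
  proof (cases "distinct (u # B)")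
    case True then show ?thesis using less.prems by blast
  next
    case False
    show ?thesis
    proof (cases "u \<in> set B")
      case True
      then obtain B1 B2 where B: "B = B1 @ u # B2" by (meson split_list)
      have "W = (A @ [u] @ B1) @ [u] @ B2 @ [u] @ C" using less.prems B by simp
      moreover have "length B2 < length B" using B by simp
      ultimately show ?thesis using less.hyps by blast
    next
      case nu: False
      then have "\<not> distinct B" using False by simp
      then obtain B1 y B2 B3 where B: "B = B1 @ [y] @ B2 @ [y] @ B3"
        using not_distinct_decomp by blast
      have "W = (A @ [u] @ B1) @ [y] @ B2 @ [y] @ (B3 @ [u] @ C)" using less.prems B by simp
      moreover have "length B2 < length B" using B by simp
      ultimately show ?thesis using less.hyps by blast
    qed
  qed
qed

lemma walk_to_path:
  assumes pos: "\<And>C. is_cycle E C \<Longrightarrow> cycle_weight wt C > 0"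
  shows "W \<noteq> [] \<Longrightarrow> set (edges_of W) \<subseteq> E \<Longrightarrow>
    \<exists>P. is_path E (hd W) (last W) P \<and> path_weight wt P \<le> path_weight wt W
       \<and> (\<not> distinct W \<longrightarrow> path_weight wt P < path_weight wt W)"
proof (induction "length W" arbitrary: W rule: less_induct)
  case less
  show ?case
  proof (cases "distinct W")
    case True
    then show ?thesis using less.prems unfolding is_path_def by auto
  next
    case False
    then obtain A0 u0 B0 C0 where W0: "W = A0 @ [u0] @ B0 @ [u0] @ C0"
      using not_distinct_decomp by blast
    obtain A u B C where W: "W = A @ [u] @ B @ [u] @ C" and dc: "distinct (u # B)"
      using decomp_distinct_cycle[OF W0] by (elim exE conjE)
    define W' where "W' = A @ u # C"
    have eW: "edges_of W = edges_of (A @ [u]) @ edges_of (u # B @ [u]) @ edges_of (u # C)"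
      unfolding W using edges_of_append_cons[of A u "B @ u # C"] edges_of_append_cons[of "u # B" u C] by simp
    have eW': "edges_of W' = edges_of (A @ [u]) @ edges_of (u # C)"
      unfolding W'_def using edges_of_append_cons[of A u C] by simp
    have pW: "path_weight wt W = path_weight wt (A @ [u]) + path_weight wt (u # B @ [u]) + path_weight wt (u # C)"
      unfolding W using pw_append_cons[of wt A u "B @ u # C"] pw_append_cons[of wt "u # B" u C] by simp
    have pW': "path_weight wt W' = path_weight wt (A @ [u]) + path_weight wt (u # C)"
      unfolding W'_def using pw_append_cons[of wt A u C] by simp
    have ecyc: "edges_of (u # B @ [u]) = edges_of (u # B) @ [(last (u # B), u)]"
      using edges_of_snoc[of "u # B" u] by simp
    have "is_cycle E (u # B)"
      unfolding is_cycle_def using dc less.prems(2) eW ecyc by auto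
    then have "cycle_weight wt (u # B) > 0" by (rule pos)
    moreover have "cycle_weight wt (u # B) = path_weight wt (u # B @ [u])"
      unfolding cycle_weight_def using pw_snoc[of "u # B" wt u] by simp
    ultimately have lt: "path_weight wt W' < path_weight wt W" using pW pW' by simp
    have "length W' < length W" unfolding W'_def W by simp
    moreover have "W' \<noteq> []" unfolding W'_def by simp
    moreover have "set (edges_of W') \<subseteq> E" using less.prems(2) eW eW' by auto
    ultimately obtain P where P: "is_path E (hd W') (last W') P" "path_weight wt P \<le> path_weight wt W'"
      using less.hyps by blast
    have "hd W' = hd W" "last W' = last W" unfolding W'_def W by (cases A; simp)+
    then show ?thesis using P lt by auto
  qed
qed

lemma gdist_le: "is_path E x y P \<Longrightarrow> gdist E wt x y \<le> ereal (path_weight wt P)"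
  unfolding gdist_def by (rule INF_lower) simp

lemma prefix_suffix:
  assumes "distinct (A @ a # v # B)"
  shows "prefix_to a (A @ a # v # B) = A @ [a]" "suffix_from v (A @ a # v # B) = v # B"
proof -
  have "\<And>x. x \<in> set A \<Longrightarrow> x \<noteq> a" "\<And>x. x \<in> set A \<Longrightarrow> x \<noteq> v" "a \<noteq> v"
    using assms by auto
  then show "prefix_to a (A @ a # v # B) = A @ [a]" "suffix_from v (A @ a # v # B) = v # B"
    unfolding prefix_to_def suffix_from_def by simp_all
qed

lemma edge_in_split: "(a, v) \<in> set (edges_of (A @ a # v # B))"
  using edges_of_append_cons[of A a "v # B"] by simp

lemma split_path:
  assumes P: "P \<in> shortest_paths E wt x y" and PA: "P = A @ a # v # B"
    and eq: "gdist E wt x y = gdist E wt x a + ereal (wt (a, v)) + gdist E wt v y"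
  shows "A @ [a] \<in> shortest_paths E wt x a" "v # B \<in> shortest_paths E wt v y"
proof -
  have ip: "is_path E x y P" and pe: "ereal (path_weight wt P) = gdist E wt x y"
    using P unfolding shortest_paths_def by auto
  have eP: "edges_of P = edges_of (A @ [a]) @ edges_of (a # v # B)"
    unfolding PA by (rule edges_of_append_cons)
  have i1: "is_path E x a (A @ [a])"
    using ip eP unfolding is_path_def PA by (cases A) auto
  have i2: "is_path E v y (v # B)"
    using ip eP unfolding is_path_def PA by auto
  have pw: "path_weight wt P = path_weight wt (A @ [a]) + wt (a, v) + path_weight wt (v # B)"
    unfolding PA using pw_append_cons[of wt A a "v # B"] by simp
  define g1 where "g1 = gdist E wt x a"
  define g2 where "g2 = gdist E wt v y"
  have l1: "g1 \<le> ereal (path_weight wt (A @ [a]))" unfolding g1_def by (rule gdist_le[OF i1])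
  have l2: "g2 \<le> ereal (path_weight wt (v # B))" unfolding g2_def by (rule gdist_le[OF i2])
  have s: "g1 + ereal (wt (a, v)) + g2 = ereal (path_weight wt (A @ [a]) + wt (a, v) + path_weight wt (v # B))"
    using eq pe pw unfolding g1_def g2_def by simp
  have "g1 = ereal (path_weight wt (A @ [a])) \<and> g2 = ereal (path_weight wt (v # B))"
    using l1 l2 s by (cases g1; cases g2) auto
  then show "A @ [a] \<in> shortest_paths E wt x a" "v # B \<in> shortest_paths E wt v y"
    unfolding shortest_paths_def g1_def g2_def using i1 i2 by auto
qed

lemma concat_path:
  assumes pos: "\<And>C. is_cycle E C \<Longrightarrow> cycle_weight wt C > 0"
    and R: "A @ [a] \<in> shortest_paths E wt x a" and S: "v # B \<in> shortest_paths E wt v y"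
    and e: "(a, v) \<in> E"
    and eq: "gdist E wt x y = gdist E wt x a + ereal (wt (a, v)) + gdist E wt v y"
  shows "A @ a # v # B \<in> shortest_paths E wt x y"
proof -
  define W where "W = A @ a # v # B"
  have iR: "is_path E x a (A @ [a])" and pR: "ereal (path_weight wt (A @ [a])) = gdist E wt x a"
    using R unfolding shortest_paths_def by auto
  have iS: "is_path E v y (v # B)" and pS: "ereal (path_weight wt (v # B)) = gdist E wt v y"
    using S unfolding shortest_paths_def by auto
  have eW: "edges_of W = edges_of (A @ [a]) @ (a, v) # edges_of (v # B)"
    unfolding W_def using edges_of_append_cons[of A a "v # B"] by simp
  have pw: "path_weight wt W = path_weight wt (A @ [a]) + wt (a, v) + path_weight wt (v # B)"
    unfolding W_def using pw_append_cons[of wt A a "v # B"] by simp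
  have pe: "ereal (path_weight wt W) = gdist E wt x y"
    using eq pw by (simp flip: pR pS)
  have hd: "hd W = x" using iR unfolding W_def is_path_def by (cases A) auto
  have lst: "last W = y" using iS unfolding W_def is_path_def by (cases B) auto
  have eE: "set (edges_of W) \<subseteq> E" using iR iS e eW unfolding is_path_def by auto
  have dW: "distinct W"
  proof (rule ccontr)
    assume "\<not> distinct W"
    then obtain P where P: "is_path E x y P" "path_weight wt P < path_weight wt W"
      using walk_to_path[OF pos, where W=W] eE hd lst unfolding W_def by auto
    have "gdist E wt x y \<le> ereal (path_weight wt P)" by (rule gdist_le[OF P(1)])
    then show False using P(2) by (simp flip: pe)
  qed
  have "is_path E x y W" unfolding is_path_def using dW hd lst eE W_def by auto
  then show ?thesis using pe unfolding shortest_paths_def W_def by auto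
qed

lemma sp_shape:
  assumes "P \<in> shortest_paths E wt x y"
  shows "\<exists>A. P = A @ [y]" "\<exists>B. P = x # B"
proof -
  have "P \<noteq> []" "hd P = x" "last P = y" using assms unfolding shortest_paths_def is_path_def by auto
  then show "\<exists>A. P = A @ [y]" "\<exists>B. P = x # B"
    by (metis append_butlast_last_id, metis list.collapse)
qed

lemma sp_distinct: "P \<in> shortest_paths E wt x y \<Longrightarrow> distinct P"
  unfolding shortest_paths_def is_path_def by auto

theorem lemma7:
  fixes V :: "'v set" and E :: "('v \<times> 'v) set" and wt :: "'v \<times> 'v \<Rightarrow> real"
    and x1 y1 x2 y2 a v :: 'v
  assumes "finite V" and "E \<subseteq> V \<times> V"
    and "\<And>C. is_cycle E C \<Longrightarrow> cycle_weight wt C > 0"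
    and "x1 \<in> V" "y1 \<in> V" "x2 \<in> V" "y2 \<in> V"
    and "(a, v) \<in> E"
    and "gdist E wt x1 y1 = gdist E wt x1 a + ereal (wt (a, v)) + gdist E wt v y1"
    and "gdist E wt x2 y2 = gdist E wt x2 a + ereal (wt (a, v)) + gdist E wt v y2"
    and "(1::'k::field) + 1 = 0"
  shows "(Hsum E wt a v x1 y1 x2 y2 :: ('v,'k) epoly)
       = Fsum E wt x2 a * (fmono [a, v])^2 * Fdisj E wt x1 a v y2 * Fsum E wt v y1"
proof -
  note pos = assms(3) and e = assms(8) and eq1 = assms(9) and eq2 = assms(10)
  define PQ where "PQ = shortest_paths E wt x2 a"
  define PS where "PS = shortest_paths E wt v y1"
  define D where "D = {(P1,P2). P1 \<in> shortest_paths E wt x1 a \<and> P2 \<in> shortest_paths E wt v y2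
                        \<and> int_disjoint x1 a P1 v y2 P2}"
  define HS where "HS = {(P1,P2). P1 \<in> shortest_paths E wt x1 y1 \<and> P2 \<in> shortest_paths E wt x2 y2
                        \<and> (a,v) \<in> set (edges_of P1) \<and> (a,v) \<in> set (edges_of P2)
                        \<and> int_disjoint x1 a (prefix_to a P1) v y2 (suffix_from v P2)}"
  define z2 where "z2 = (fmono [a, v] :: ('v,'k) epoly)^2"
  define \<phi> where "\<phi> = (\<lambda>Q R S. fmono Q * z2 * (case R of (R1, R2) \<Rightarrow> fmono R1 * fmono R2) * (fmono S :: ('v,'k) epoly))"
  define T where "T = PQ \<times> (D \<times> PS)"
  define h where "h = (\<lambda>(Q :: 'v list, ((R1 :: 'v list, R2 :: 'v list), S :: 'v list)). (R1 @ S, Q @ R2))"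
  define k where "k = (\<lambda>(P1, P2). (prefix_to a P2, ((prefix_to a P1, suffix_from v P2), suffix_from v P1)))"
  define g where "g = (\<lambda>(P1, P2). (fmono P1 * fmono P2 :: ('v,'k) epoly))"
  have rhs: "Fsum E wt x2 a * (fmono [a, v])^2 * Fdisj E wt x1 a v y2 * Fsum E wt v y1
      = (\<Sum>Q\<in>PQ. \<Sum>R\<in>D. \<Sum>S\<in>PS. \<phi> Q R S)"
    unfolding Fsum_def Fdisj_def PQ_def D_def PS_def \<phi>_def z2_def
    by (simp only: sum_distrib_left[symmetric] sum_distrib_right[symmetric])
  also have "\<dots> = sum (\<lambda>(Q, R, S). \<phi> Q R S) T"
    unfolding T_def by (simp add: sum.cartesian_product)
  finally have rhs: "Fsum E wt x2 a * (fmono [a, v])^2 * Fdisj E wt x1 a v y2 * Fsum E wt v y1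
      = sum (\<lambda>(Q, R, S). \<phi> Q R S) T" .
  have lhs: "Hsum E wt a v x1 y1 x2 y2 = sum g HS"
    unfolding Hsum_def HS_def g_def by simp
  have fw: "h t \<in> HS \<and> k (h t) = t \<and> g (h t) = (case t of (Q, R, S) \<Rightarrow> \<phi> Q R S)" if t: "t \<in> T" for t
  proof -
    obtain Q R1 R2 S where tt: "t = (Q, ((R1, R2), S))" by (cases t) auto
    have Q: "Q \<in> shortest_paths E wt x2 a" and R1: "R1 \<in> shortest_paths E wt x1 a"
      and R2: "R2 \<in> shortest_paths E wt v y2" and S: "S \<in> shortest_paths E wt v y1"
      and dj: "int_disjoint x1 a R1 v y2 R2"
      using t unfolding tt T_def PQ_def D_def PS_def by auto
    obtain A1 where A1: "R1 = A1 @ [a]" using sp_shape(1)[OF R1] by blast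
    obtain A2 where A2: "Q = A2 @ [a]" using sp_shape(1)[OF Q] by blast
    obtain B1 where B1: "S = v # B1" using sp_shape(2)[OF S] by blast
    obtain B2 where B2: "R2 = v # B2" using sp_shape(2)[OF R2] by blast
    have P1: "A1 @ a # v # B1 \<in> shortest_paths E wt x1 y1"
      using concat_path[OF pos, where A=A1 and a=a and x=x1 and v=v and B=B1 and y=y1] R1 S e eq1 A1 B1 by simp
    have P2: "A2 @ a # v # B2 \<in> shortest_paths E wt x2 y2"
      using concat_path[OF pos, where A=A2 and a=a and x=x2 and v=v and B=B2 and y=y2] Q R2 e eq2 A2 B2 by simp
    note ps1 = prefix_suffix[OF sp_distinct[OF P1]] and ps2 = prefix_suffix[OF sp_distinct[OF P2]]
    have ht: "h t = (A1 @ a # v # B1, A2 @ a # v # B2)"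
      unfolding h_def tt A1 A2 B1 B2 by simp
    have "h t \<in> HS" unfolding ht HS_def using P1 P2 edge_in_split[of a v A1 B1] edge_in_split[of a v A2 B2] ps1 ps2 dj A1 B2 by simp
    moreover have "k (h t) = t" unfolding ht unfolding k_def tt using ps1 ps2 A1 A2 B1 B2 by simp
    moreover have "g (h t) = (case t of (Q, R, S) \<Rightarrow> \<phi> Q R S)"
      unfolding ht unfolding g_def tt \<phi>_def z2_def
      using A1 A2 B1 B2 by (simp add: fmono_split power2_eq_square ac_simps)
    ultimately show ?thesis by blast
  qed
  have bw: "k p \<in> T \<and> h (k p) = p" if p: "p \<in> HS" for p
  proof -
    obtain P1 P2 where pp: "p = (P1, P2)" by (cases p) auto
    have P1: "P1 \<in> shortest_paths E wt x1 y1" and P2: "P2 \<in> shortest_paths E wt x2 y2"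
      and e1: "(a,v) \<in> set (edges_of P1)" and e2: "(a,v) \<in> set (edges_of P2)"
      and dj: "int_disjoint x1 a (prefix_to a P1) v y2 (suffix_from v P2)"
      using p unfolding pp HS_def by auto
    obtain A1 B1 where AB1: "P1 = A1 @ a # v # B1" using decomp_edge[OF e1] by blast
    obtain A2 B2 where AB2: "P2 = A2 @ a # v # B2" using decomp_edge[OF e2] by blast
    note ps1 = prefix_suffix[OF sp_distinct[OF P1[unfolded AB1]]]
      and ps2 = prefix_suffix[OF sp_distinct[OF P2[unfolded AB2]]]
    note s1 = split_path[OF P1 AB1 eq1] and s2 = split_path[OF P2 AB2 eq2]
    have kp: "k p = (A2 @ [a], ((A1 @ [a], v # B2), v # B1))"
      unfolding k_def pp AB1 AB2 using ps1 ps2 by simp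
    have "k p \<in> T" unfolding kp T_def PQ_def D_def PS_def using s1 s2 dj ps1 ps2
      unfolding AB1 AB2 by simp
    moreover have "h (k p) = p" unfolding kp unfolding h_def pp AB1 AB2 by simp
    ultimately show ?thesis by blast
  qed
  have bij: "bij_betw h T HS"
    by (rule bij_betw_byWitness[where f'=k]) (use fw bw in auto)
  have "sum g HS = sum (g \<circ> h) T" using sum.reindex_bij_betw[OF bij, of g] by simp
  also have "\<dots> = sum (\<lambda>(Q, R, S). \<phi> Q R S) T"
    by (rule sum.cong) (use fw in auto)
  finally show ?thesis using lhs rhs by simp
qed

end
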